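(* Consider the deterministic forward–backward system: find continuous functions $\mu,h:[0,T]\to\mathbb{R}$ such that $$\frac{d\mu_t}{dt}=-w_t^{-2}h_t,\qquad \frac{dh_t}{dt}=0,\qquad t\in[0,T],\qquad \mu_0=0,\qquad h_T=g(\mu_T).$$ This system has exactly three solutions, namely $$(\mu_t,h_t)_{t\in[0,T]}=\Big(-A\int_0^t w_s^{-2}\,ds,\;A\Big)_{t\in[0,T]},\qquad A\in\{-1,0,1\}.$$
   Context: Fix $T>0$, $\kappa\in\mathbb{R}$ and $\delta\in(0,T)$. Let $\eta:[0,T]\to\mathbb{R}$ be the solution of the Riccati equation $\eta_t'=\eta_t^2-2\kappa\eta_t-1$, $\eta_T=1$. Set $w_t=\exp\big(\int_t^T(\eta_s-\kappa)\,ds\big)$ and $r_t=\int_t^T w_s^{-2}\,ds$ for $t\in[0,T]$; note $r_\delta>0$. Define $g:\mathbb{R}\to\mathbb{R}$ by $g(x)=-x/r_\delta$ if $|x|\le r_\delta$ and $g(x)=-\mathrm{sign}(x)$ if $|x|>r_\delta$. *)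

theory Defs
  imports "HOL-Analysis.Analysis"
begin

definition wfun :: "real \<Rightarrow> real \<Rightarrow> (real \<Rightarrow> real) \<Rightarrow> real \<Rightarrow> real" where
  "wfun T \<kappa> \<eta> t = exp (integral {t..T} (\<lambda>s. \<eta> s - \<kappa>))"

definition rfun :: "real \<Rightarrow> real \<Rightarrow> (real \<Rightarrow> real) \<Rightarrow> real \<Rightarrow> real" where
  "rfun T \<kappa> \<eta> t = integral {t..T} (\<lambda>s. 1 / (wfun T \<kappa> \<eta> s)^2)"

definition gfun :: "real \<Rightarrow> real \<Rightarrow> real" where
  "gfun rd x = (if \<bar>x\<bar> \<le> rd then - x / rd else - sgn x)"

definition is_solution :: "real \<Rightarrow> real \<Rightarrow> (real \<Rightarrow> real) \<Rightarrow> real \<Rightarrow>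
    (real \<Rightarrow> real) \<Rightarrow> (real \<Rightarrow> real) \<Rightarrow> bool" where
  "is_solution T \<kappa> \<eta> \<delta> \<mu> h \<longleftrightarrow>
     continuous_on {0..T} \<mu> \<and> continuous_on {0..T} h \<and>
     (\<forall>t\<in>{0..T}. (\<mu> has_real_derivative (- (1 / (wfun T \<kappa> \<eta> t)^2) * h t)) (at t within {0..T})) \<and>
     (\<forall>t\<in>{0..T}. (h has_real_derivative 0) (at t within {0..T})) \<and>
     \<mu> 0 = 0 \<and> h T = gfun (rfun T \<kappa> \<eta> \<delta>) (\<mu> T)"

end

theory Submission
  imports Defs
begin

theorem mainTheorem1:
  fixes T \<kappa> \<delta> :: real and \<eta> :: "real \<Rightarrow> real"
  assumes "T > 0" and "0 < \<delta>" and "\<delta> < T"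
    and "\<forall>t\<in>{0..T}. (\<eta> has_real_derivative ((\<eta> t)^2 - 2 * \<kappa> * \<eta> t - 1)) (at t within {0..T})"
    and "\<eta> T = 1"
  shows "\<forall>\<mu> h. is_solution T \<kappa> \<eta> \<delta> \<mu> h \<longleftrightarrow>
           (\<exists>A\<in>{-1, 0, 1::real}. \<forall>t\<in>{0..T}.
               \<mu> t = - A * integral {0..t} (\<lambda>s. 1 / (wfun T \<kappa> \<eta> s)^2) \<and> h t = A)"
proof (intro allI)
  fix \<mu> h :: "real \<Rightarrow> real"
  define F where "F = (\<lambda>s. 1 / (wfun T \<kappa> \<eta> s)^2)"
  define I where "I = (\<lambda>t. integral {0..t} F)"
  define r where "r = rfun T \<kappa> \<eta> \<delta>"
  define R where "R = I T"
  have ceta: "continuous_on {0..T} \<eta>"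
    using assms(4) by (meson DERIV_continuous continuous_on_eq_continuous_within)
  have cint: "continuous_on {0..T} (\<lambda>s. integral {s..T} (\<lambda>s. \<eta> s - \<kappa>))"
    by (rule indefinite_integral_continuous_1', rule integrable_continuous_real)
       (intro continuous_intros ceta)
  have wpos: "wfun T \<kappa> \<eta> s > 0" for s by (simp add: wfun_def)
  have cF: "continuous_on {0..T} F"
    unfolding F_def wfun_def
    by (intro continuous_intros cint) simp
  have Fpos: "F s > 0" for s using wpos[of s] by (simp add: F_def)
  have dI: "(I has_real_derivative F t) (at t within {0..T})" if "t \<in> {0..T}" for t
    unfolding I_def by (rule integral_has_real_derivative[OF cF that])
  have cI: "continuous_on {0..T} I"
    using dI by (meson DERIV_continuous continuous_on_eq_continuous_within)
  have intF: "F integrable_on {0..T}" using cF integrable_continuous_real by blast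
  have split: "integral {0..\<delta>} F + integral {\<delta>..T} F = R"
    unfolding R_def I_def using Henstock_Kurzweil_Integration.integral_combine[OF _ _ intF, of \<delta>] assms by simp
  have cF1: "continuous_on {0..\<delta>} F" using cF assms by (auto intro: continuous_on_subset)
  have cF2: "continuous_on {\<delta>..T} F" using cF assms by (auto intro: continuous_on_subset)
  have p1: "integral {0..\<delta>} (\<lambda>_. 0::real) < integral {0..\<delta>} F"
    by (rule integral_less_real) (use cF1 assms Fpos in auto)
  have p2: "integral {\<delta>..T} (\<lambda>_. 0::real) < integral {\<delta>..T} F"
    by (rule integral_less_real) (use cF2 assms Fpos in auto)
  have rdef: "r = integral {\<delta>..T} F" unfolding r_def rfun_def F_def by simp
  have rpos: "r > 0" using p2 rdef by simp
  have rR: "r < R" using p1 p2 split rdef by simp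
  have I0: "I 0 = 0" unfolding I_def by simp
  have key: "is_solution T \<kappa> \<eta> \<delta> \<mu> h \<longleftrightarrow>
           (\<exists>A\<in>{-1, 0, 1::real}. \<forall>t\<in>{0..T}. \<mu> t = - A * I t \<and> h t = A)"
  proof
    assume S: "is_solution T \<kappa> \<eta> \<delta> \<mu> h"
    have Sc: "continuous_on {0..T} \<mu>" and Sd: "\<forall>t\<in>{0..T}. (\<mu> has_real_derivative (- F t * h t)) (at t within {0..T})"
      and Sh: "\<forall>t\<in>{0..T}. (h has_real_derivative 0) (at t within {0..T})" and S0: "\<mu> 0 = 0"
      and ST: "h T = gfun r (\<mu> T)"
      using S unfolding is_solution_def F_def r_def by - (elim conjE; assumption)+
    obtain c where hc: "\<forall>x\<in>{0..T}. h x = c"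
      using has_field_derivative_zero_constant[of "{0..T}" h] Sh by (meson convex_real_interval(5))
    define A where "A = h T"
    have hA: "\<forall>t\<in>{0..T}. h t = A" using hc assms(1) by (simp add: A_def)
    have dd: "((\<lambda>t. \<mu> t + A * I t) has_real_derivative 0) (at t within {0..T})"
      if "t \<in> {0..T}" for t
    proof -
      have "((\<lambda>t. \<mu> t + A * I t) has_real_derivative (- F t * h t + A * F t)) (at t within {0..T})"
        by (intro DERIV_add DERIV_cmult Sd[rule_format, OF that] dI[OF that])
      thus ?thesis using hA that by simp
    qed
    obtain c2 where c2: "\<forall>x\<in>{0..T}. \<mu> x + A * I x = c2"
      using has_field_derivative_zero_constant[of "{0..T}" "\<lambda>t. \<mu> t + A * I t"] dd
      by (meson convex_real_interval(5))
    have "c2 = 0" using c2[rule_format, of 0] assms(1) S0 I0 by simp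
    hence muI: "\<forall>t\<in>{0..T}. \<mu> t = - A * I t" using c2 by (auto simp: algebra_simps)
    have gA: "A = gfun r (- A * R)"
      using ST muI assms(1) by (simp add: A_def R_def)
    have "A \<in> {-1,0,1}"
    proof (cases "\<bar>- A * R\<bar> \<le> r")
      case True
      hence "A = A * R / r" using gA by (simp add: gfun_def)
      hence "A * r = A * R" using rpos by (simp add: field_simps)
      hence "A = 0" using rR by simp
      thus ?thesis by simp
    next
      case False
      hence "A = - sgn (- A * R)" using gA by (simp add: gfun_def)
      thus ?thesis using rR rpos by (auto simp: sgn_if split: if_splits)
    qed
    thus "\<exists>A\<in>{-1, 0, 1::real}. \<forall>t\<in>{0..T}. \<mu> t = - A * I t \<and> h t = A"
      using muI hA by blast
  next
    assume "\<exists>A\<in>{-1, 0, 1::real}. \<forall>t\<in>{0..T}. \<mu> t = - A * I t \<and> h t = A"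
    then obtain A where A: "A \<in> {-1,0,1}" and eq: "\<forall>t\<in>{0..T}. \<mu> t = - A * I t \<and> h t = A"
      by blast
    have c1: "continuous_on {0..T} \<mu>"
      by (rule continuous_on_eq[of _ "\<lambda>t. - A * I t"]) (use cI eq in \<open>auto intro!: continuous_intros\<close>)
    have c2: "continuous_on {0..T} h"
      by (rule continuous_on_eq[of _ "\<lambda>t. A"]) (use eq in auto)
    have d1: "(\<mu> has_real_derivative (- F t * h t)) (at t within {0..T})" if "t \<in> {0..T}" for t
    proof -
      have "((\<lambda>t. - A * I t) has_real_derivative (- F t * h t)) (at t within {0..T})"
        using dI[OF that] eq that by (auto intro!: derivative_eq_intros)
      thus ?thesis
        by (rule has_field_derivative_transform_within[OF _ zero_less_one that]) (use eq in auto)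
    qed
    have d2: "(h has_real_derivative 0) (at t within {0..T})" if "t \<in> {0..T}" for t
      by (rule has_field_derivative_transform_within[OF _ zero_less_one that, of "\<lambda>t. A"])
         (use eq in auto)
    have m0: "\<mu> 0 = 0" using eq I0 assms(1) by auto
    have "A = gfun r (- A * R)"
      using A rR rpos by (auto simp: gfun_def)
    hence hT: "h T = gfun r (\<mu> T)" using eq assms(1) by (simp add: R_def)
    show "is_solution T \<kappa> \<eta> \<delta> \<mu> h"
      unfolding is_solution_def F_def r_def by (intro conjI c1 c2 m0 hT[unfolded r_def]) (use d1 d2 in \<open>simp_all add: F_def\<close>)
  qed
  thus "is_solution T \<kappa> \<eta> \<delta> \<mu> h \<longleftrightarrow>
           (\<exists>A\<in>{-1, 0, 1::real}. \<forall>t\<in>{0..T}.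
               \<mu> t = - A * integral {0..t} (\<lambda>s. 1 / (wfun T \<kappa> \<eta> s)^2) \<and> h t = A)"
    by (simp only: I_def F_def)
qed

end
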